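(* Let $\mathcal{H}$ be a Hilbert space of finite dimension $d$, let $\rho,\eta\in\mathcal{D}(\mathcal{H})$ be quantum states and let $0<s<1$. Then $\eta=\frac{\rho-s'\tau}{1-s'}$ for some real number $0<s'\le s$ and some state $\tau\in\mathcal{D}(\mathcal{H})$ if and only if $S_m\!\left(\frac1s\rho-\frac{1-s}{s}\eta\right)\ge0$ for all $m=1,2,\dots,d$.
   Context: $\mathcal{D}(\mathcal{H})$ is the set of density operators on $\mathcal{H}$. For a Hermitian operator $X$ on $\mathcal{H}$, define recursively $S_0(X)=1$ and $S_m(X)=\frac1m\sum_{l=1}^m(-1)^{l-1}\operatorname{tr}[X^l]\,S_{m-l}(X)$ for $m\ge1$. *)

theory Defs
  imports "HOL-Analysis.Analysis"
begin

text \<open>Operators on a d-dimensional Hilbert space are d x d complex matrices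
  indexed by a finite type 'n, with d = CARD('n).\<close>

definition adjoint_cmat :: "complex^'n^'n \<Rightarrow> complex^'n^'n" where
  "adjoint_cmat A = (\<chi> i j. cnj (A $ j $ i))"

definition hermitian_cmat :: "complex^'n^'n \<Rightarrow> bool" where
  "hermitian_cmat A \<longleftrightarrow> adjoint_cmat A = A"

definition psd_cmat :: "complex^'n^'n \<Rightarrow> bool" where
  "psd_cmat A \<longleftrightarrow> hermitian_cmat A \<and>
     (\<forall>x::complex^'n. (\<Sum>i\<in>UNIV. cnj (x $ i) * (A *v x) $ i) \<in> \<real> \<and>
                      0 \<le> Re (\<Sum>i\<in>UNIV. cnj (x $ i) * (A *v x) $ i))"

definition density_ops :: "(complex^'n^'n) set" where
  "density_ops = {A. psd_cmat A \<and> trace A = 1}"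

fun mpow :: "complex^'n^'n \<Rightarrow> nat \<Rightarrow> complex^'n^'n" where
  "mpow A 0 = mat 1"
| "mpow A (Suc k) = A ** mpow A k"

function Sfun :: "nat \<Rightarrow> complex^'n^'n \<Rightarrow> complex" where
  "Sfun 0 X = 1"
| "Sfun (Suc m) X = (1 / of_nat (Suc m)) *
      (\<Sum>l\<in>{1..Suc m}. (-1) ^ (l - 1) * trace (mpow X l) * Sfun (Suc m - l) X)"
  by pat_completeness auto
termination
  by (relation "Wellfounded.measure fst") auto

end

theory Submission
  imports Defs "Jordan_Normal_Form.Schur_Decomposition" "HOL-Library.Complex_Order"
begin


no_notation vec_index (infixl "$" 100)


definition psum :: "complex list \<Rightarrow> nat \<Rightarrow> complex" where
  "psum L l = sum_list (map (\<lambda>x. x ^ l) L)"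

fun esym :: "complex list \<Rightarrow> nat \<Rightarrow> complex" where
  "esym [] m = (if m = 0 then 1 else 0)"
| "esym (a # L) 0 = 1"
| "esym (a # L) (Suc m) = esym L (Suc m) + a * esym L m"

lemma esym_Cons: "esym (a # L) j = esym L j + (if j = 0 then 0 else a * esym L (j - 1))"
  by (cases j) (cases L; simp)+

lemma esym_0[simp]: "esym L 0 = 1"
  by (cases L) auto

lemma psum_Cons[simp]: "psum (a # L) l = a ^ l + psum L l"
  by (simp add: psum_def)

lemma psum_Nil[simp]: "psum [] l = 0"
  by (simp add: psum_def)

lemma esym_Nil_Suc[simp]: "esym [] (Suc m) = 0" by simp

lemma telescope:
  fixes T :: "nat \<Rightarrow> complex"
  shows "(\<Sum>i\<le>k. T i) + (\<Sum>i\<le>k. if i < k then - T (Suc i) else 0) = T 0"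
proof (cases k)
  case 0 then show ?thesis by simp
next
  case (Suc k')
  have "(\<Sum>i\<le>k. T i) = T 0 + (\<Sum>i\<le>k'. T (Suc i))"
    unfolding Suc by (rule sum.atMost_Suc_shift)
  moreover have "(\<Sum>i\<le>k. if i < k then - T (Suc i) else 0) = (\<Sum>i\<le>k'. - T (Suc i))"
    unfolding Suc by (simp add: sum.atMost_Suc)
  ultimately show ?thesis by (simp add: sum_negf)
qed

lemma newton_aux:
  "of_nat (Suc k) * esym L (Suc k) =
     (\<Sum>i\<le>k. (-1) ^ i * psum L (Suc i) * esym L (k - i))"
proof (induction L arbitrary: k)
  case Nil
  then show ?case by simp
next
  case (Cons a L)
  let ?E = "esym L" and ?P = "psum L"
  have A: "(\<Sum>i\<le>k. (-1) ^ i * ?P (Suc i) * (if k - i = 0 then 0 else a * ?E (k - i - 1)))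
        = a * of_nat k * ?E k"
  proof (cases k)
    case 0 then show ?thesis by simp
  next
    case (Suc k')
    have "(\<Sum>i\<le>k. (-1) ^ i * ?P (Suc i) * (if k - i = 0 then 0 else a * ?E (k - i - 1)))
        = (\<Sum>i\<le>k'. (-1) ^ i * ?P (Suc i) * (a * ?E (k' - i)))"
      unfolding Suc by (simp add: sum.atMost_Suc Suc_diff_le)
    also have "\<dots> = a * (\<Sum>i\<le>k'. (-1) ^ i * ?P (Suc i) * ?E (k' - i))"
      by (simp add: sum_distrib_left mult_ac)
    also have "\<dots> = a * of_nat k * ?E k"
      using Cons.IH[of k'] Suc by simp
    finally show ?thesis .
  qed
  have B: "(\<Sum>i\<le>k. (-1) ^ i * a ^ Suc i * ?E (k - i))
         + (\<Sum>i\<le>k. (-1) ^ i * a ^ Suc i * (if k - i = 0 then 0 else a * ?E (k - i - 1)))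
        = a * ?E k"
  proof -
    have "(\<Sum>i\<le>k. (-1) ^ i * a ^ Suc i * (if k - i = 0 then 0 else a * ?E (k - i - 1)))
       = (\<Sum>i\<le>k. if i < k then - ((-1) ^ Suc i * a ^ Suc (Suc i) * ?E (k - Suc i)) else 0)"
      by (rule sum.cong) (auto simp: mult_ac)
    then show ?thesis
      using telescope[of "\<lambda>i. (-1) ^ i * a ^ Suc i * ?E (k - i)" k] by simp
  qed
  have "(\<Sum>i\<le>k. (-1) ^ i * psum (a # L) (Suc i) * esym (a # L) (k - i))
     = (\<Sum>i\<le>k. (-1) ^ i * ?P (Suc i) * ?E (k - i))
     + (\<Sum>i\<le>k. (-1) ^ i * ?P (Suc i) * (if k - i = 0 then 0 else a * ?E (k - i - 1)))
     + ((\<Sum>i\<le>k. (-1) ^ i * a ^ Suc i * ?E (k - i))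
       + (\<Sum>i\<le>k. (-1) ^ i * a ^ Suc i * (if k - i = 0 then 0 else a * ?E (k - i - 1))))"
    unfolding psum_Cons esym_Cons by (simp add: sum.distrib algebra_simps)
  also have "\<dots> = of_nat (Suc k) * ?E (Suc k) + a * of_nat k * ?E k + a * ?E k"
    using Cons.IH[of k] A B by simp
  also have "\<dots> = of_nat (Suc k) * esym (a # L) (Suc k)"
    by (simp add: algebra_simps)
  finally show ?case by simp
qed

lemma esym_big: "length L < m \<Longrightarrow> esym L m = 0"
proof (induction L arbitrary: m)
  case Nil then show ?case by simp
next
  case (Cons a L)
  then obtain k where "m = Suc k" by (cases m) auto
  with Cons show ?case by simp
qed

lemma esym_prod:
  "(\<Prod>x\<leftarrow>L. 1 + x * u) = (\<Sum>m\<le>length L. esym L m * u ^ m)"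
proof (induction L)
  case Nil then show ?case by simp
next
  case (Cons a L)
  let ?n = "length L"
  have "(\<Sum>m\<le>Suc ?n. esym (a # L) m * u ^ m)
      = (\<Sum>m\<le>Suc ?n. esym L m * u ^ m) + (\<Sum>m\<le>Suc ?n. (if m = 0 then 0 else a * esym L (m - 1)) * u ^ m)"
    unfolding esym_Cons by (simp add: sum.distrib algebra_simps)
  also have "(\<Sum>m\<le>Suc ?n. esym L m * u ^ m) = (\<Sum>m\<le>?n. esym L m * u ^ m)"
    by (simp add: sum.atMost_Suc esym_big)
  also have "(\<Sum>m\<le>Suc ?n. (if m = 0 then 0 else a * esym L (m - 1)) * u ^ m)
      = (\<Sum>m\<le>?n. a * esym L m * u ^ Suc m)"
    by (subst sum.atMost_Suc_shift) simp
  also have "\<dots> = a * u * (\<Sum>m\<le>?n. esym L m * u ^ m)"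
    by (simp add: sum_distrib_left mult_ac)
  finally show ?case using Cons.IH by (simp add: algebra_simps)
qed

lemma esym_nonneg: "(\<forall>x\<in>set L. 0 \<le> x) \<Longrightarrow> 0 \<le> esym L m"
proof (induction L arbitrary: m)
  case Nil then show ?case by (simp add: less_eq_complex_def)
next
  case (Cons a L)
  then show ?case by (cases m) (simp add: less_eq_complex_def, auto intro!: add_nonneg_nonneg mult_nonneg_nonneg)
qed

lemma esym_nonneg_imp:
  assumes real: "\<forall>x\<in>set L. x \<in> \<real>"
    and nn: "\<forall>m\<in>{1..length L}. 0 \<le> esym L m"
  shows "\<forall>x\<in>set L. 0 \<le> x"
proof (rule ccontr)
  assume "\<not> (\<forall>x\<in>set L. 0 \<le> x)"
  then obtain x where x: "x \<in> set L" "\<not> 0 \<le> x" by auto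
  from real x obtain r where r: "x = of_real r" by (auto elim: Reals_cases)
  with x have "r < 0" by (auto simp: less_eq_complex_def)
  define u where "u = - 1 / r"
  have u: "u > 0" using \<open>r < 0\<close> by (simp add: u_def)
  have "1 + x * of_real u = 0" using \<open>r < 0\<close> by (simp add: r u_def)
  hence "(\<Prod>y\<leftarrow>L. 1 + y * of_real u) = 0" using x(1)
    by (simp add: prod_list_zero_iff)
  hence S: "(\<Sum>m\<le>length L. esym L m * of_real u ^ m) = 0" by (simp add: esym_prod)
  have "(\<Sum>m\<le>length L. esym L m * of_real u ^ m) = 1 + (\<Sum>m\<in>{1..length L}. esym L m * of_real u ^ m)"
    by (simp only: sum.atMost_shift One_nat_def sum.atLeast1_atMost_eq) simp
  moreover have "0 \<le> (\<Sum>m\<in>{1..length L}. esym L m * of_real u ^ m)"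
    using nn u by (auto intro!: sum_nonneg mult_nonneg_nonneg simp: less_eq_complex_def)
  ultimately have "(1::complex) \<le> 0" using S
    by (metis add.commute add_eq_0_iff neg_le_0_iff_le)
  then show False by (simp add: less_eq_complex_def)
qed


definition ix :: "nat \<Rightarrow> 'n::finite" where
  "ix = (SOME g. bij_betw g {..<CARD('n)} (UNIV::'n set))"

lemma ix_bij: "bij_betw (ix :: nat \<Rightarrow> 'n::finite) {..<CARD('n)} UNIV"
proof -
  obtain h :: "nat \<Rightarrow> 'n" where "bij_betw h {0..<card (UNIV::'n set)} UNIV"
    using ex_bij_betw_nat_finite[of "UNIV::'n set"] by auto
  hence "\<exists>g. bij_betw g {..<CARD('n)} (UNIV::'n set)" by (auto simp: atLeast0LessThan)
  thus ?thesis unfolding ix_def by (rule someI_ex)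
qed

lemma sum_ix: "(\<Sum>i<CARD('n). f (ix i :: 'n::finite)) = (\<Sum>a\<in>UNIV. f a)"
  using sum.reindex_bij_betw[OF ix_bij, of f] by simp

lemma sum_ix': "(\<Sum>i\<in>{0..<CARD('n)}. f (ix i :: 'n::finite)) = (\<Sum>a\<in>UNIV. f a)"
  using sum_ix[of f] by (simp add: atLeast0LessThan)

lemma ix_inj: "i < CARD('n) \<Longrightarrow> j < CARD('n) \<Longrightarrow> (ix i = (ix j :: 'n::finite)) = (i = j)"
  using ix_bij[where 'n='n] unfolding bij_betw_def inj_on_def by auto

definition ixinv :: "'n::finite \<Rightarrow> nat" where
  "ixinv a = inv_into {..<CARD('n)} ix a"

lemma ixinv: "ixinv a < CARD('n::finite)" "ix (ixinv (a::'n)) = a"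
proof -
  have s: "a \<in> ix ` {..<CARD('n)}" using ix_bij[where 'n='n] by (auto simp: bij_betw_def)
  show "ixinv a < CARD('n::finite)" using inv_into_into[OF s] unfolding ixinv_def by simp
  show "ix (ixinv (a::'n)) = a" using f_inv_into_f[OF s] unfolding ixinv_def by simp
qed

lemma ixinv_ix: "i < CARD('n::finite) \<Longrightarrow> ixinv (ix i :: 'n) = i"
  using ix_bij[where 'n='n] unfolding ixinv_def
  by (auto simp: bij_betw_def inv_into_f_f)

definition toJ :: "complex^'n^'n \<Rightarrow> complex mat" where
  "toJ A = Matrix.mat CARD('n::finite) CARD('n) (\<lambda>(i,j). A $ ix i $ ix j)"

definition toJv :: "complex^'n \<Rightarrow> complex Matrix.vec" where
  "toJv v = Matrix.vec CARD('n::finite) (\<lambda>i. v $ ix i)"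

definition fromJv :: "complex Matrix.vec \<Rightarrow> complex^'n::finite" where
  "fromJv w = (\<chi> a. vec_index w (ixinv a))"

lemma toJ_carrier[simp]: "toJ (A::complex^'n^'n) \<in> carrier_mat CARD('n::finite) CARD('n)"
  by (simp add: toJ_def)

lemma toJ_dims[simp]: "dim_row (toJ (A::complex^'n^'n)) = CARD('n::finite)"
  "dim_col (toJ (A::complex^'n^'n)) = CARD('n::finite)"
  by (simp_all add: toJ_def)

lemma toJ_index[simp]: "i < CARD('n) \<Longrightarrow> j < CARD('n) \<Longrightarrow>
  toJ (A::complex^'n^'n::finite) $$ (i,j) = A $ ix i $ ix j"
  by (simp add: toJ_def)

lemma toJv_carrier[simp]: "toJv (v::complex^'n::finite) \<in> carrier_vec CARD('n)"
  "dim_vec (toJv (v::complex^'n::finite)) = CARD('n)"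
  by (simp_all add: toJv_def)

lemma toJv_index[simp]: "i < CARD('n) \<Longrightarrow> vec_index (toJv (v::complex^'n::finite)) i = v $ ix i"
  by (simp add: toJv_def)

lemma toJ_mult: "toJ ((A::complex^'n^'n::finite) ** B) = toJ A * toJ B"
proof (rule eq_matI)
  fix i j assume i: "i < dim_row (toJ A * toJ B)" and j: "j < dim_col (toJ A * toJ B)"
  hence i': "i < CARD('n)" and j': "j < CARD('n)" by auto
  have "(toJ A * toJ B) $$ (i,j) = (\<Sum>k\<in>{0..<CARD('n)}. A $ ix i $ ix k * B $ ix k $ ix j)"
    using i' j' by (simp add: scalar_prod_def)
  also have "\<dots> = (\<Sum>a\<in>UNIV. A $ ix i $ a * B $ a $ ix j)"
    by (rule sum_ix')
  finally show "toJ (A ** B) $$ (i,j) = (toJ A * toJ B) $$ (i,j)"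
    using i' j' by (simp add: matrix_matrix_mult_def)
qed auto

lemma toJ_one: "toJ (Finite_Cartesian_Product.mat 1 :: complex^'n^'n::finite) = 1\<^sub>m CARD('n)"
  by (rule eq_matI) (auto simp: Finite_Cartesian_Product.mat_def ix_inj)

lemma mpow_Suc': "mpow A (Suc k) = mpow A k ** A"
  by (induction k) (simp_all add: matrix_mul_assoc)

lemma toJ_mpow: "toJ (mpow (A::complex^'n^'n::finite) l) = toJ A ^\<^sub>m l"
  by (induction l) (simp_all add: toJ_one mpow_Suc' toJ_mult del: mpow.simps(2))

definition jtr :: "complex mat \<Rightarrow> complex" where
  "jtr M = (\<Sum>i<dim_row M. M $$ (i,i))"

lemma trace_toJ: "trace (A::complex^'n^'n::finite) = jtr (toJ A)"
  by (simp add: jtr_def trace_def sum_ix[of "\<lambda>a. A $ a $ a"])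

lemma toJv_mult: "toJ (A::complex^'n^'n::finite) *\<^sub>v toJv v = toJv (A *v v)"
proof (rule eq_vecI)
  fix i assume "i < dim_vec (toJv (A *v v))"
  hence i: "i < CARD('n)" by simp
  have "vec_index (toJ A *\<^sub>v toJv v) i = (\<Sum>k\<in>{0..<CARD('n)}. A $ ix i $ ix k * v $ ix k)"
    using i by (simp add: scalar_prod_def)
  also have "\<dots> = (\<Sum>a\<in>UNIV. A $ ix i $ a * v $ a)" by (rule sum_ix')
  finally show "vec_index (toJ A *\<^sub>v toJv v) i = vec_index (toJv (A *v v)) i"
    using i by (simp add: matrix_vector_mult_def)
qed simp

lemma toJv_fromJv: "w \<in> carrier_vec CARD('n::finite) \<Longrightarrow> toJv (fromJv w :: complex^'n) = w"
  by (rule eq_vecI) (auto simp: fromJv_def ixinv_ix)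

lemma toJv_zero_iff: "toJv (v::complex^'n::finite) = 0\<^sub>v CARD('n) \<longleftrightarrow> v = 0"
proof
  assume h: "toJv v = 0\<^sub>v CARD('n)"
  have "\<forall>a::'n. v $ a = 0 $ a"
  proof
    fix a :: 'n
    have "vec_index (toJv v) (ixinv a) = 0" using h ixinv(1)[of a] by simp
    thus "v $ a = 0 $ a" using ixinv[of a] by simp
  qed
  thus "v = 0" by (simp add: Finite_Cartesian_Product.vec_eq_iff)
qed (rule eq_vecI, auto)

lemma toJv_smult: "toJv (c *s (v::complex^'n::finite)) = c \<cdot>\<^sub>v toJv v"
  by (rule eq_vecI) auto

lemma fromJv_smult: "w \<in> carrier_vec CARD('n::finite) \<Longrightarrow> (fromJv (c \<cdot>\<^sub>v w) :: complex^'n) = c *s fromJv w"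
  by (simp add: fromJv_def Finite_Cartesian_Product.vec_eq_iff ixinv vector_scalar_mult_def)


lemma jtr_comm:
  assumes A: "A \<in> carrier_mat n n" and B: "B \<in> carrier_mat n n"
  shows "jtr (A * B) = jtr (B * A)"
proof -
  have "jtr (A * B) = (\<Sum>i<n. \<Sum>k\<in>{0..<n}. A $$ (i,k) * B $$ (k,i))"
    using A B by (simp add: jtr_def scalar_prod_def)
  also have "\<dots> = (\<Sum>k\<in>{0..<n}. \<Sum>i<n. A $$ (i,k) * B $$ (k,i))"
    by (rule sum.swap)
  also have "\<dots> = jtr (B * A)"
    using A B by (simp add: jtr_def scalar_prod_def atLeast0LessThan mult.commute)
  finally show ?thesis .
qed

lemma upper_tri_pow:
  fixes B :: "complex mat"
  assumes B: "B \<in> carrier_mat n n" and ut: "upper_triangular B"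
  shows "upper_triangular (B ^\<^sub>m l) \<and> (\<forall>i<n. (B ^\<^sub>m l) $$ (i,i) = (B $$ (i,i)) ^ l)"
proof (induction l)
  case 0
  then show ?case using B by auto
next
  case (Suc l)
  let ?C = "B ^\<^sub>m l"
  have C: "?C \<in> carrier_mat n n" using B by simp
  have Cut: "\<And>i k. i < n \<Longrightarrow> k < i \<Longrightarrow> ?C $$ (i,k) = 0"
    using Suc.IH C by (auto simp: upper_triangular_def)
  have But: "\<And>i k. i < n \<Longrightarrow> k < i \<Longrightarrow> B $$ (i,k) = 0"
    using ut B by (auto simp: upper_triangular_def)
  have ent: "(?C * B) $$ (i,j) = (\<Sum>k\<in>{0..<n}. ?C $$ (i,k) * B $$ (k,j))" if "i < n" "j < n" for i j
    using that C B by (simp add: scalar_prod_def)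
  have "upper_triangular (?C * B)"
  proof (rule upper_triangularI)
    fix i j assume ji: "j < i" and i: "i < dim_row (?C * B)"
    hence i: "i < n" using C B by simp
    have "(\<Sum>k\<in>{0..<n}. ?C $$ (i,k) * B $$ (k,j)) = 0"
    proof (rule sum.neutral, rule ballI)
      fix k assume k: "k \<in> {0..<n}"
      show "?C $$ (i,k) * B $$ (k,j) = 0"
      proof (cases "k < i")
        case True then show ?thesis using Cut[OF i] by simp
      next
        case False then show ?thesis using But[of k j] k ji by simp
      qed
    qed
    thus "(?C * B) $$ (i,j) = 0" using ent[OF i] ji i by simp
  qed
  moreover have "(?C * B) $$ (i,i) = (B $$ (i,i)) ^ Suc l" if i: "i < n" for i
  proof -
    have "(\<Sum>k\<in>{0..<n}. ?C $$ (i,k) * B $$ (k,i)) = (\<Sum>k\<in>{0..<n}. if k = i then ?C $$ (i,i) * B $$ (i,i) else 0)"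
      by (rule sum.cong) (use Cut But i in \<open>auto simp: neq_iff\<close>)
    also have "\<dots> = ?C $$ (i,i) * B $$ (i,i)" using i by simp
    finally show ?thesis using ent[OF i i] Suc.IH i by (simp add: mult.commute)
  qed
  ultimately show ?case by simp
qed

lemma spectrum_list:
  fixes M :: "complex mat"
  assumes M: "M \<in> carrier_mat n n"
  shows "\<exists>es. length es = n \<and> (\<forall>c. eigenvalue M c \<longleftrightarrow> c \<in> set es) \<and>
     (\<forall>l. jtr (M ^\<^sub>m l) = psum es l)"
proof -
  obtain es where cp: "char_poly M = (\<Prod>a\<leftarrow>es. [:- a, 1:])" and len: "length es = n"
    using char_poly_factorized[OF M] by auto
  have ev: "eigenvalue M c \<longleftrightarrow> c \<in> set es" for c
    unfolding eigenvalue_root_char_poly[OF M] cp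
    by (simp add: poly_prod_list o_def prod_list_zero_iff image_iff eq_commute[of 0])
  obtain B P Q where sd: "schur_decomposition M es = (B,P,Q)"
    by (cases "schur_decomposition M es") auto
  from schur_decomposition[OF M cp sd]
  have wit: "similar_mat_wit M B P Q" and ut: "upper_triangular B" and dg: "diag_mat B = es"
    by auto
  from wit M have carr: "B \<in> carrier_mat n n" "P \<in> carrier_mat n n" "Q \<in> carrier_mat n n"
    and QP: "Q * P = 1\<^sub>m n"
    unfolding similar_mat_wit_def Let_def by auto
  have tr: "jtr (M ^\<^sub>m l) = psum es l" for l
  proof -
    have Bl: "B ^\<^sub>m l \<in> carrier_mat n n" using carr by simp
    have "jtr (M ^\<^sub>m l) = jtr (P * B ^\<^sub>m l * Q)"
      using similar_mat_wit_pow_id[OF wit] by simp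
    also have "\<dots> = jtr (Q * (P * B ^\<^sub>m l))"
      by (rule jtr_comm[of _ n]) (use carr Bl in auto)
    also have "Q * (P * B ^\<^sub>m l) = (Q * P) * B ^\<^sub>m l"
      using assoc_mult_mat[OF carr(3) carr(2) Bl] by simp
    also have "\<dots> = B ^\<^sub>m l" using QP left_mult_one_mat[OF Bl] by simp
    also have "jtr (B ^\<^sub>m l) = (\<Sum>i<n. (B $$ (i,i)) ^ l)"
      using upper_tri_pow[OF carr(1) ut, of l] carr by (simp add: jtr_def)
    also have "\<dots> = psum es l"
      unfolding psum_def dg[symmetric] diag_mat_def using carr
      by (simp add: sum_set_upt_conv_sum_list_nat[symmetric] atLeast0LessThan o_def)
    finally show ?thesis .
  qed
  show ?thesis using len ev tr by blast
qed



definition qf :: "complex^'n^'n \<Rightarrow> complex^'n \<Rightarrow> complex" where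
  "qf A x = (\<Sum>i\<in>UNIV. cnj (x $ i) * (A *v x) $ i)"

lemma herm_entry: "hermitian_cmat (A::complex^'n^'n) \<longleftrightarrow> (\<forall>i j. cnj (A $ j $ i) = A $ i $ j)"
  unfolding hermitian_cmat_def adjoint_cmat_def
  by (auto simp: Finite_Cartesian_Product.vec_eq_iff)

lemma qf_cnj:
  assumes H: "hermitian_cmat (A::complex^'n^'n)"
  shows "cnj (qf A x) = qf A x"
proof -
  have h: "\<And>i j. cnj (A $ j $ i) = A $ i $ j" using H herm_entry by blast
  have "cnj (qf A x) = (\<Sum>i\<in>UNIV. \<Sum>j\<in>UNIV. x $ i * cnj (A $ i $ j) * cnj (x $ j))"
    by (simp add: qf_def matrix_vector_mult_def sum_distrib_left mult_ac)
  also have "\<dots> = (\<Sum>j\<in>UNIV. \<Sum>i\<in>UNIV. x $ i * cnj (A $ i $ j) * cnj (x $ j))"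
    by (rule sum.swap)
  also have "\<dots> = qf A x"
    by (simp add: qf_def matrix_vector_mult_def sum_distrib_left mult_ac h)
  finally show ?thesis .
qed

lemma qf_real: "hermitian_cmat A \<Longrightarrow> qf A x \<in> \<real>"
  using qf_cnj Reals_cnj_iff by blast

lemma inner_cx: "inner (a::complex) b = Re (cnj a * b)"
  by (simp add: inner_complex_def)

lemma inner_vec_cx: "inner (x::complex^'n) y = Re (\<Sum>i\<in>UNIV. cnj (x $ i) * y $ i)"
  by (simp add: inner_vec_def inner_cx Re_sum)

lemma Re_qf: "Re (qf A x) = inner x (A *v x)"
  by (simp add: qf_def inner_vec_cx)

lemma selfadj:
  assumes H: "hermitian_cmat (A::complex^'n^'n)"
  shows "inner x (A *v y) = inner (A *v x) y"
proof -
  have h: "\<And>i j. cnj (A $ j $ i) = A $ i $ j" using H herm_entry by blast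
  have "(\<Sum>i\<in>UNIV. cnj (x $ i) * (A *v y) $ i) = (\<Sum>i\<in>UNIV. \<Sum>j\<in>UNIV. cnj (x $ i) * A $ i $ j * y $ j)"
    by (simp add: matrix_vector_mult_def sum_distrib_left mult_ac)
  also have "\<dots> = (\<Sum>j\<in>UNIV. \<Sum>i\<in>UNIV. cnj (x $ i) * A $ i $ j * y $ j)"
    by (rule sum.swap)
  also have "\<dots> = (\<Sum>j\<in>UNIV. cnj ((A *v x) $ j) * y $ j)"
    by (simp add: matrix_vector_mult_def sum_distrib_right sum_distrib_left mult_ac h)
  finally show ?thesis by (simp add: inner_vec_cx)
qed

lemma mv_add: "(A::complex^'n^'n) *v (x + y) = A *v x + A *v y"
  by (simp add: matrix_vector_right_distrib)

lemma mv_scaleR: "(A::complex^'n^'n) *v (c *\<^sub>R x) = c *\<^sub>R (A *v x)"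
  by (simp add: Finite_Cartesian_Product.vec_eq_iff matrix_vector_mult_def scaleR_sum_right)

lemma mv_linear: "linear (\<lambda>x. (A::complex^'n^'n) *v x)"
  by (rule linearI) (simp_all add: mv_add mv_scaleR)

lemma mv_cont: "continuous_on S (\<lambda>x. (A::complex^'n^'n) *v x)"
  by (rule linear_continuous_on) (simp add: mv_linear linear_conv_bounded_linear)

lemma scaleR_comp: "(c *\<^sub>R (v::complex^'n)) $ i = complex_of_real c * v $ i"
  by (simp only: vector_scaleR_component) (simp add: scaleR_conv_of_real)

lemma rayleigh_min:
  fixes A :: "complex^'n^'n"
  assumes H: "hermitian_cmat A"
  shows "\<exists>v \<mu>. norm v = 1 \<and> A *v v = of_real \<mu> *s v \<and> (\<forall>x. \<mu> * inner x x \<le> inner x (A *v x))"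
proof -
  let ?S = "sphere (0::complex^'n) 1"
  let ?phi = "\<lambda>x. inner x (A *v x)"
  have ne: "?S \<noteq> {}"
  proof -
    obtain x :: "complex^'n" where "norm x = 1" using vector_choose_size[of 1] by auto
    thus ?thesis by (auto simp: sphere_def)
  qed
  have cont: "continuous_on ?S ?phi"
    by (intro continuous_intros mv_cont)
  obtain v where vS: "v \<in> ?S" and vmin: "\<And>y. y \<in> ?S \<Longrightarrow> ?phi v \<le> ?phi y"
    using continuous_attains_inf[OF compact_sphere ne cont] by blast
  define \<mu> where "\<mu> = ?phi v"
  have nv: "norm v = 1" using vS by simp
  have vv: "inner v v = 1" using nv power2_norm_eq_inner[of v] by simp
  have phi_scale: "?phi (c *\<^sub>R x) = c^2 * ?phi x" for c x
    by (simp add: mv_scaleR power2_eq_square)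
  have bound: "\<mu> * inner x x \<le> ?phi x" for x
  proof (cases "x = 0")
    case True then show ?thesis by simp
  next
    case False
    hence nx: "norm x > 0" by simp
    let ?u = "(1 / norm x) *\<^sub>R x"
    have "?u \<in> ?S" using nx by simp
    hence "\<mu> \<le> ?phi ?u" unfolding \<mu>_def by (rule vmin)
    also have "\<dots> = ?phi x / (norm x)^2" by (subst phi_scale) (simp add: power_divide)
    finally have "\<mu> * (norm x)^2 \<le> ?phi x" using nx by (simp add: field_simps)
    thus ?thesis by (simp add: power2_norm_eq_inner)
  qed
  define g where "g x = A *v x - \<mu> *\<^sub>R x" for x
  define psi where "psi x = inner x (g x)" for x
  have psi_nn: "psi x \<ge> 0" for x
    using bound[of x] by (simp add: psi_def g_def inner_diff_right)
  have psi_v: "psi v = 0" by (simp add: psi_def g_def inner_diff_right vv \<mu>_def)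
  have g_add: "g (x + y) = g x + g y" for x y by (simp add: g_def mv_add algebra_simps)
  have g_scale: "g (c *\<^sub>R x) = c *\<^sub>R g x" for c x by (simp add: g_def mv_scaleR algebra_simps)
  have g_sa: "inner x (g y) = inner (g x) y" for x y
    by (simp add: g_def inner_diff_right inner_diff_left selfadj[OF H])
  define w where "w = g v"
  have expand: "psi (v + t *\<^sub>R w) = 2 * t * inner w w + t^2 * psi w" for t
  proof -
    have "psi (v + t *\<^sub>R w) = psi v + t * inner v (g w) + t * inner w (g v) + t^2 * psi w"
      by (simp add: psi_def g_add g_scale inner_add_left inner_add_right power2_eq_square algebra_simps)
    also have "inner v (g w) = inner w (g v)" by (metis g_sa inner_commute)
    finally show ?thesis using psi_v by (simp add: w_def)
  qed
  define a where "a = inner w w"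
  define b where "b = psi w"
  have a0: "a \<ge> 0" by (simp add: a_def)
  have b0: "b \<ge> 0" by (simp add: b_def psi_nn)
  define t where "t = - a / (b + 1)"
  have tb: "t * (b + 1) = - a" using b0 by (simp add: t_def)
  have "0 \<le> 2 * t * a + t^2 * b"
    using psi_nn[of "v + t *\<^sub>R w"] expand[of t] by (simp add: a_def b_def)
  hence "0 \<le> (2 * t * a + t^2 * b) * (b + 1)^2"
    using b0 by simp
  also have "(2 * t * a + t^2 * b) * (b + 1)^2 = 2 * a * (b + 1) * (t * (b + 1)) + (t * (b + 1))^2 * b"
    by (simp add: algebra_simps power2_eq_square)
  also have "\<dots> = - (a^2 * (b + 2))"
    unfolding tb by (simp add: algebra_simps power2_eq_square)
  finally have le: "a^2 * (b + 2) \<le> 0" by simp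
  have "a = 0"
  proof (rule ccontr)
    assume "a \<noteq> 0"
    hence "a^2 * (b + 2) > 0" using b0 by (intro mult_pos_pos) auto
    with le show False by simp
  qed
  hence "w = 0" by (simp add: a_def)
  hence "A *v v = \<mu> *\<^sub>R v" by (simp add: w_def g_def)
  hence "\<forall>i. (A *v v) $ i = (\<mu> *\<^sub>R v) $ i" by simp
  hence "\<forall>i. (A *v v) $ i = of_real \<mu> * v $ i"
    by (metis scaleR_comp)
  hence "A *v v = of_real \<mu> *s v"
    by (simp only: Finite_Cartesian_Product.vec_eq_iff vector_smult_component) blast
  thus ?thesis using nv bound by blast
qed



lemma toJv_inj: "toJv (x::complex^'n::finite) = toJv y \<Longrightarrow> x = y"
proof -
  assume h: "toJv x = toJv y"
  have "\<forall>a::'n. x $ a = y $ a"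
  proof
    fix a :: 'n
    have "vec_index (toJv x) (ixinv a) = vec_index (toJv y) (ixinv a)" using h by simp
    thus "x $ a = y $ a" using ixinv[of a] by simp
  qed
  thus ?thesis by (simp add: Finite_Cartesian_Product.vec_eq_iff)
qed

lemma eig_bridge: "(\<exists>v. v \<noteq> 0 \<and> (A::complex^'n^'n::finite) *v v = c *s v) \<longleftrightarrow> eigenvalue (toJ A) c"
proof
  assume "\<exists>v. v \<noteq> 0 \<and> A *v v = c *s v"
  then obtain v where v: "v \<noteq> 0" "A *v v = c *s v" by blast
  have "eigenvector (toJ A) (toJv v) c"
    unfolding eigenvector_def using v
    by (simp add: toJv_mult toJv_smult toJv_zero_iff)
  thus "eigenvalue (toJ A) c" unfolding eigenvalue_def by blast
next
  assume "eigenvalue (toJ A) c"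
  then obtain w where w: "w \<in> carrier_vec CARD('n)" "w \<noteq> 0\<^sub>v CARD('n)" "toJ A *\<^sub>v w = c \<cdot>\<^sub>v w"
    unfolding eigenvalue_def eigenvector_def by auto
  define v :: "complex^'n" where "v = fromJv w"
  have tv: "toJv v = w" unfolding v_def by (rule toJv_fromJv[OF w(1)])
  have "v \<noteq> 0" using w(2) tv toJv_zero_iff by blast
  moreover have "toJv (A *v v) = toJv (c *s v)"
    using w(3) tv by (simp add: toJv_mult[symmetric] toJv_smult)
  hence "A *v v = c *s v" by (rule toJv_inj)
  ultimately show "\<exists>v. v \<noteq> 0 \<and> A *v v = c *s v" by blast
qed

lemma eig_props:
  assumes H: "hermitian_cmat (A::complex^'n^'n)" and ev: "A *v v = c *s v" and v0: "v \<noteq> 0"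
  shows "c \<in> \<real> \<and> (psd_cmat A \<longrightarrow> 0 \<le> c)"
proof -
  define K where "K = (\<Sum>i\<in>UNIV. cnj (v $ i) * v $ i)"
  have qK: "qf A v = c * K"
    by (simp add: qf_def K_def ev sum_distrib_left mult_ac)
  have ImK: "Im K = 0" by (simp add: K_def Im_sum)
  have ReK: "Re K = inner v v" by (simp add: K_def inner_vec_cx)
  have Kr: "K = of_real (inner v v)" using ImK ReK by (simp add: complex_eq_iff)
  have pos: "inner v v > 0" using v0 by simp
  have c: "c = qf A v / of_real (inner v v)" using qK Kr pos by simp
  have "c \<in> \<real>" unfolding c using qf_real[OF H] by (simp add: Reals_divide)
  moreover have "0 \<le> c" if P: "psd_cmat A"
  proof -
    have "0 \<le> Re (qf A v)" using P unfolding psd_cmat_def qf_def by blast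
    hence "0 \<le> Re c" unfolding c using pos by (simp add: Re_divide_of_real)
    moreover have "Im c = 0" using \<open>c \<in> \<real>\<close> by (simp add: complex_is_Real_iff)
    ultimately show ?thesis by (simp add: less_eq_complex_def)
  qed
  ultimately show ?thesis by blast
qed

lemma psd_from_eigs:
  assumes H: "hermitian_cmat (A::complex^'n^'n)"
    and nn: "\<And>c v. v \<noteq> 0 \<Longrightarrow> A *v v = c *s v \<Longrightarrow> 0 \<le> c"
  shows "psd_cmat A"
proof -
  obtain v \<mu> where v: "norm v = 1" "A *v v = of_real \<mu> *s v"
    and b: "\<And>x. \<mu> * inner x x \<le> inner x (A *v x)"
    using rayleigh_min[OF H] by blast
  have "v \<noteq> 0" using v(1) by auto
  hence "0 \<le> complex_of_real \<mu>" using nn v(2) by blast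
  hence mu: "0 \<le> \<mu>" by (simp add: less_eq_complex_def)
  have "0 \<le> Re (qf A x)" for x
    using b[of x] mu by (simp add: Re_qf) (smt (verit) inner_ge_zero mult_nonneg_nonneg)
  thus ?thesis using H qf_real[OF H] unfolding psd_cmat_def qf_def by blast
qed

lemma Sfun_esym:
  assumes tr: "\<And>l. trace (mpow X l) = psum es l"
  shows "Sfun m X = esym es m"
proof (induction m rule: less_induct)
  case (less m)
  show ?case
  proof (cases m)
    case 0 then show ?thesis by simp
  next
    case (Suc k)
    have "(\<Sum>l\<in>{1..Suc k}. (-1) ^ (l - 1) * trace (mpow X l) * Sfun (Suc k - l) X)
        = (\<Sum>i<Suc k. (-1) ^ i * trace (mpow X (Suc i)) * Sfun (k - i) X)"
      by (simp only: One_nat_def sum.atLeast1_atMost_eq) simp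
    also have "\<dots> = (\<Sum>i\<le>k. (-1) ^ i * psum es (Suc i) * esym es (k - i))"
      unfolding lessThan_Suc_atMost
      by (rule sum.cong) (use less.IH Suc tr in \<open>auto simp del: mpow.simps\<close>)
    also have "\<dots> = of_nat (Suc k) * esym es (Suc k)"
      by (rule newton_aux[symmetric])
    finally show ?thesis unfolding Suc
      by (simp del: of_nat_Suc)
  qed
qed

lemma X_spec:
  "\<exists>es. length es = CARD('n) \<and> (\<forall>c. eigenvalue (toJ (X::complex^'n^'n::finite)) c \<longleftrightarrow> c \<in> set es)
     \<and> (\<forall>m. Sfun m X = esym es m)"
proof -
  obtain es where es: "length es = CARD('n)" "\<forall>c. eigenvalue (toJ X) c \<longleftrightarrow> c \<in> set es"
    "\<forall>l. jtr (toJ X ^\<^sub>m l) = psum es l"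
    using spectrum_list[OF toJ_carrier[of X]] by blast
  have "trace (mpow X l) = psum es l" for l
    using es(3) by (simp add: trace_toJ toJ_mpow)
  hence "\<forall>m. Sfun m X = esym es m" using Sfun_esym by blast
  thus ?thesis using es by blast
qed

lemma key:
  assumes H: "hermitian_cmat (X::complex^'n^'n)"
  shows "psd_cmat X \<longleftrightarrow> (\<forall>m\<in>{1..CARD('n)}. Sfun m X \<in> \<real> \<and> 0 \<le> Re (Sfun m X))"
proof -
  obtain es where es: "length es = CARD('n)" "\<And>c. eigenvalue (toJ X) c \<longleftrightarrow> c \<in> set es"
    "\<And>m. Sfun m X = esym es m"
    using X_spec[of X] by blast
  have ev: "\<exists>v. v \<noteq> 0 \<and> X *v v = e *s v" if "e \<in> set es" for e
    using that es(2) eig_bridge by blast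
  have real: "\<forall>e\<in>set es. e \<in> \<real>"
    using ev eig_props[OF H] by blast
  show ?thesis
  proof
    assume P: "psd_cmat X"
    have "\<forall>e\<in>set es. 0 \<le> e" using ev eig_props[OF H] P by blast
    hence "0 \<le> esym es m" for m by (rule esym_nonneg)
    thus "\<forall>m\<in>{1..CARD('n)}. Sfun m X \<in> \<real> \<and> 0 \<le> Re (Sfun m X)"
      using es(3) by (simp add: nonnegative_complex_is_real less_eq_complex_def)
  next
    assume R: "\<forall>m\<in>{1..CARD('n)}. Sfun m X \<in> \<real> \<and> 0 \<le> Re (Sfun m X)"
    have "\<forall>m\<in>{1..length es}. 0 \<le> esym es m"
      using R es(1) es(3) by (auto simp: less_eq_complex_def complex_is_Real_iff)
    hence nn: "\<forall>e\<in>set es. 0 \<le> e" using esym_nonneg_imp real by blast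
    show "psd_cmat X"
    proof (rule psd_from_eigs[OF H])
      fix c v assume "v \<noteq> 0" "X *v v = c *s v"
      hence "eigenvalue (toJ X) c" using eig_bridge by blast
      thus "0 \<le> c" using nn es(2) by blast
    qed
  qed
qed



lemma herm_add: "hermitian_cmat A \<Longrightarrow> hermitian_cmat B \<Longrightarrow> hermitian_cmat (A + B)"
  by (simp add: herm_entry)

lemma herm_diff: "hermitian_cmat A \<Longrightarrow> hermitian_cmat B \<Longrightarrow> hermitian_cmat (A - B)"
  by (simp add: herm_entry)

lemma herm_scaleR: "hermitian_cmat A \<Longrightarrow> hermitian_cmat (c *\<^sub>R A)"
  by (simp add: herm_entry scaleR_comp)

lemma mv_scaleR_left: "(c *\<^sub>R (A::complex^'n^'n)) *v x = c *\<^sub>R (A *v x)"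
  by (simp add: Finite_Cartesian_Product.vec_eq_iff matrix_vector_mult_def scaleR_sum_right scaleR_comp
      sum_distrib_left mult_ac)

lemma qf_add: "qf (A + B) x = qf A x + qf B x"
  by (simp add: qf_def matrix_vector_mult_add_rdistrib sum.distrib algebra_simps)

lemma qf_scaleR: "qf (c *\<^sub>R A) x = of_real c * qf A x"
  unfolding qf_def mv_scaleR_left scaleR_comp by (simp add: sum_distrib_left mult_ac)

lemma psd_comb:
  assumes A: "psd_cmat A" and B: "psd_cmat B" and a: "0 \<le> a" and b: "0 \<le> b"
  shows "psd_cmat (a *\<^sub>R A + b *\<^sub>R B)"
proof -
  have HA: "hermitian_cmat A" and HB: "hermitian_cmat B" using A B by (auto simp: psd_cmat_def)
  have H: "hermitian_cmat (a *\<^sub>R A + b *\<^sub>R B)" by (intro herm_add herm_scaleR HA HB)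
  have "0 \<le> Re (qf (a *\<^sub>R A + b *\<^sub>R B) x)" for x
  proof -
    have "0 \<le> Re (qf A x)" "0 \<le> Re (qf B x)" using A B unfolding psd_cmat_def qf_def by blast+
    thus ?thesis using a b by (simp add: qf_add qf_scaleR)
  qed
  thus ?thesis using H qf_real[OF H] unfolding psd_cmat_def qf_def by blast
qed

lemma trace_scaleR: "trace (c *\<^sub>R (A::complex^'n^'n)) = of_real c * trace A"
  unfolding trace_def vector_scaleR_component by (simp add: sum_distrib_left scaleR_conv_of_real)

theorem lemma9:
  fixes \<rho> \<eta> :: "complex^'n^'n" and s :: real
  assumes "\<rho> \<in> density_ops" and "\<eta> \<in> density_ops"
    and "0 < s" and "s < 1"
  shows "(\<exists>s' \<tau>. 0 < s' \<and> s' \<le> s \<and> \<tau> \<in> density_ops \<and>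
            \<eta> = (1 / (1 - s')) *\<^sub>R (\<rho> - s' *\<^sub>R \<tau>))
     \<longleftrightarrow> (\<forall>m\<in>{1..CARD('n)}.
            Sfun m ((1 / s) *\<^sub>R \<rho> - ((1 - s) / s) *\<^sub>R \<eta>) \<in> \<real> \<and>
            0 \<le> Re (Sfun m ((1 / s) *\<^sub>R \<rho> - ((1 - s) / s) *\<^sub>R \<eta>)))"
proof -
  define X where "X = (1 / s) *\<^sub>R \<rho> - ((1 - s) / s) *\<^sub>R \<eta>"
  have P\<rho>: "psd_cmat \<rho>" "trace \<rho> = 1" and P\<eta>: "psd_cmat \<eta>" "trace \<eta> = 1"
    using assms(1,2) by (auto simp: density_ops_def)
  have H\<rho>: "hermitian_cmat \<rho>" and H\<eta>: "hermitian_cmat \<eta>"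
    using P\<rho> P\<eta> by (auto simp: psd_cmat_def)
  have HX: "hermitian_cmat X" unfolding X_def by (intro herm_diff herm_scaleR H\<rho> H\<eta>)
  have s0: "s \<noteq> 0" "1 - s \<noteq> 0" using assms(3,4) by auto
  have LP: "(\<exists>s' \<tau>. 0 < s' \<and> s' \<le> s \<and> \<tau> \<in> density_ops \<and>
            \<eta> = (1 / (1 - s')) *\<^sub>R (\<rho> - s' *\<^sub>R \<tau>)) \<longleftrightarrow> psd_cmat X"
  proof
    assume "\<exists>s' \<tau>. 0 < s' \<and> s' \<le> s \<and> \<tau> \<in> density_ops \<and>
            \<eta> = (1 / (1 - s')) *\<^sub>R (\<rho> - s' *\<^sub>R \<tau>)"
    then obtain s' \<tau> where s': "0 < s'" "s' \<le> s" and \<tau>: "\<tau> \<in> density_ops"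
      and eq: "\<eta> = (1 / (1 - s')) *\<^sub>R (\<rho> - s' *\<^sub>R \<tau>)" by blast
    have s1: "1 - s' \<noteq> 0" using s' assms(4) by simp
    have "(1 - s') *\<^sub>R \<eta> = \<rho> - s' *\<^sub>R \<tau>" using eq s1 by simp
    hence r: "\<rho> = (1 - s') *\<^sub>R \<eta> + s' *\<^sub>R \<tau>" by (simp add: algebra_simps)
    have "X = ((1 - s') / s) *\<^sub>R \<eta> + (s' / s) *\<^sub>R \<tau> - ((1 - s) / s) *\<^sub>R \<eta>"
      unfolding X_def r by (simp add: scaleR_add_right)
    also have "\<dots> = ((1 - s') / s - (1 - s) / s) *\<^sub>R \<eta> + (s' / s) *\<^sub>R \<tau>"
      by (simp add: scaleR_diff_left algebra_simps)
    also have "(1 - s') / s - (1 - s) / s = (s - s') / s"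
      using s0 by (simp add: field_simps)
    finally have X: "X = (s' / s) *\<^sub>R \<tau> + ((s - s') / s) *\<^sub>R \<eta>" by (simp add: add.commute)
    have "psd_cmat \<tau>" using \<tau> by (simp add: density_ops_def)
    thus "psd_cmat X" unfolding X
      by (intro psd_comb P\<eta>) (use s' assms(3) in auto)
  next
    assume PX: "psd_cmat X"
    have "trace X = of_real (1 / s) * 1 - of_real ((1 - s) / s) * 1"
      unfolding X_def by (simp add: trace_sub trace_scaleR P\<rho> P\<eta>)
    also have "\<dots> = 1"
      using s0 by (simp add: field_simps)
    finally have "X \<in> density_ops" using PX by (simp add: density_ops_def)
    moreover have "\<eta> = (1 / (1 - s)) *\<^sub>R (\<rho> - s *\<^sub>R X)"
    proof -
      have "s *\<^sub>R X = \<rho> - (1 - s) *\<^sub>R \<eta>"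
        unfolding X_def using s0 by (simp add: scaleR_diff_right)
      hence "\<rho> - s *\<^sub>R X = (1 - s) *\<^sub>R \<eta>" by (simp add: algebra_simps)
      thus ?thesis using s0 by simp
    qed
    ultimately show "\<exists>s' \<tau>. 0 < s' \<and> s' \<le> s \<and> \<tau> \<in> density_ops \<and>
            \<eta> = (1 / (1 - s')) *\<^sub>R (\<rho> - s' *\<^sub>R \<tau>)"
      using assms(3) by blast
  qed
  show ?thesis using LP key[OF HX] unfolding X_def by simp
qed

end
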